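(* Let $N\ge1$, $\alpha_1,\dots,\alpha_N\ge0$, let $b_1,\dots,b_N>0$ be pairwise distinct, set $\alpha=\sum_j\alpha_j$ and $$K(t)=\sum_{j=1}^N\alpha_jK_j(t),\qquad K_j(t)=\sum_{i=1}^jb_i\psi_i^je^{-b_it},\qquad \psi_i^j=\prod_{k=1,k\neq i}^j\frac{b_k}{b_k-b_i}.$$ Let $u$ be the solution of $\dot u(t)=-\alpha u(t)+\int_0^tK(t-s)u(s)\,ds$, $u(0)=u_0$. Then there is an $(N+1)\times(N+1)$ Markov generator $A$ and an initial vector $p(0)$ such that the solution $p$ of $\dot p=A^*p$ satisfies $p_0(t)=u(t)$ for all $t\ge0$; specifically one may take $A^*$ to be the matrix with first row $(-\alpha,b_1,0,\dots,0)$ and, for $j=1,\dots,N$, row $j$ having entry $\alpha_j$ in column $0$, $-b_j$ on the diagonal and $b_{j+1}$ in column $j+1$ (if $j<N$), zeros elsewhere, and $p(0)=(u_0,0,\dots,0)$.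
   Context: A Markov generator on $\mathbb{R}^{N+1}$ is a real matrix with nonnegative off-diagonal entries and zero row sums; $A^*$ denotes its transpose. Components of $p$ are indexed $p=(p_0,p_1,\dots,p_N)$. *)

theory Defs
  imports "HOL-Analysis.Analysis"
begin

text \<open>Vectors in R^(N+1) and (N+1)x(N+1) matrices are represented as functions
  on natural-number indices, with only indices 0..N being relevant.\<close>

definition markov_generator :: "nat \<Rightarrow> (nat \<Rightarrow> nat \<Rightarrow> real) \<Rightarrow> bool" where
  "markov_generator N A \<longleftrightarrow>
     (\<forall>i\<le>N. \<forall>j\<le>N. i \<noteq> j \<longrightarrow> 0 \<le> A i j) \<and> (\<forall>i\<le>N. (\<Sum>j\<le>N. A i j) = 0)"

definition psi :: "(nat \<Rightarrow> real) \<Rightarrow> nat \<Rightarrow> nat \<Rightarrow> real" where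
  "psi b i j = (\<Prod>k\<in>{1..j} - {i}. b k / (b k - b i))"

definition Kj :: "(nat \<Rightarrow> real) \<Rightarrow> nat \<Rightarrow> real \<Rightarrow> real" where
  "Kj b j t = (\<Sum>i=1..j. b i * psi b i j * exp (- b i * t))"

definition kernel :: "nat \<Rightarrow> (nat \<Rightarrow> real) \<Rightarrow> (nat \<Rightarrow> real) \<Rightarrow> real \<Rightarrow> real" where
  "kernel N alpha b t = (\<Sum>j=1..N. alpha j * Kj b j t)"

definition Astar :: "nat \<Rightarrow> (nat \<Rightarrow> real) \<Rightarrow> (nat \<Rightarrow> real) \<Rightarrow> nat \<Rightarrow> nat \<Rightarrow> real" where
  "Astar N alpha b i j =
     (if i = 0 then
        (if j = 0 then - (\<Sum>k=1..N. alpha k) else if j = 1 then b 1 else 0)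
      else if i \<le> N then
        (if j = 0 then alpha i
         else if j = i then - b i
         else if j = i + 1 \<and> i < N then b (i + 1)
         else 0)
      else 0)"

end

theory Submission
  imports Defs
begin

definition wt :: "(nat \<Rightarrow> real) \<Rightarrow> nat set \<Rightarrow> nat \<Rightarrow> real" where
  "wt b T i = (\<Prod>k\<in>T - {i}. 1 / (b k - b i))"

lemma aux: "(y::real) \<noteq> 0 \<Longrightarrow> z \<noteq> 0 \<Longrightarrow> z - y \<noteq> 0 \<Longrightarrow> w / (y * z) = w / (z - y) / y - w / (z - y) / z"
proof -
  assume h: "y \<noteq> 0" "z \<noteq> 0" "z - y \<noteq> 0"
  have "1 / y - 1 / z = (z - y) / (y * z)" using h by (simp add: diff_frac_eq)
  then have "w / (z - y) / y - w / (z - y) / z = w / (z - y) * ((z - y) / (y * z))"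
    by (metis (no_types, lifting) divide_divide_eq_left right_diff_distrib times_divide_eq_right mult.right_neutral)
  also have "\<dots> = w / (y * z)" using h by simp
  finally show ?thesis by simp
qed

lemma pf:
  fixes b :: "nat \<Rightarrow> real"
  assumes "finite T" "T \<noteq> {}" "inj_on b T" "x \<notin> b ` T"
  shows "1 / (\<Prod>k\<in>T. (b k - x)) = (\<Sum>i\<in>T. wt b T i / (b i - x))"
  using assms
proof (induction T arbitrary: x rule: finite_ne_induct)
  case (singleton c)
  then show ?case by (simp add: wt_def)
next
  case (insert a T)
  have injT: "inj_on b T" using insert.prems by (auto simp: inj_on_def)
  have xa: "b a \<noteq> x" using insert.prems by auto
  have ai: "\<And>i. i \<in> T \<Longrightarrow> b a \<noteq> b i" using insert.prems insert.hyps
    by (metis inj_on_contraD insertCI)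
  have IH: "1 / (\<Prod>k\<in>T. (b k - x)) = (\<Sum>i\<in>T. wt b T i / (b i - x))"
    using insert injT by auto
  have IHa: "1 / (\<Prod>k\<in>T. (b k - b a)) = (\<Sum>i\<in>T. wt b T i / (b i - b a))"
    using insert.IH[OF injT] ai by auto
  have wa: "wt b (insert a T) a = 1 / (\<Prod>k\<in>T. (b k - b a))"
    using insert.hyps by (simp add: wt_def prod_dividef)
  have wi: "wt b (insert a T) i = wt b T i / (b a - b i)" if "i \<in> T" for i
  proof -
    have "insert a T - {i} = insert a (T - {i})" using that insert.hyps by auto
    then show ?thesis using insert.hyps by (simp add: wt_def)
  qed
  have "1 / (\<Prod>k\<in>insert a T. (b k - x)) = (1 / (b a - x)) * (1 / (\<Prod>k\<in>T. (b k - x)))"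
    using insert.hyps by simp
  also have "\<dots> = (\<Sum>i\<in>T. wt b T i / ((b i - x) * (b a - x)))"
    by (simp add: IH sum_distrib_left mult.commute)
  also have "\<dots> = (\<Sum>i\<in>T. wt b T i / (b a - b i) / (b i - x) - wt b T i / (b a - b i) / (b a - x))"
  proof (rule sum.cong)
    fix i assume i: "i \<in> T"
    have xi: "b i \<noteq> x" using insert.prems i by auto
    show "wt b T i / ((b i - x) * (b a - x)) = wt b T i / (b a - b i) / (b i - x) - wt b T i / (b a - b i) / (b a - x)"
      using aux[of "b i - x" "b a - x" "wt b T i"] xi xa ai[OF i] by simp
  qed simp
  also have "\<dots> = (\<Sum>i\<in>T. wt b (insert a T) i / (b i - x)) - (\<Sum>i\<in>T. wt b T i / (b a - b i)) / (b a - x)"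
    by (simp add: sum_subtractf sum_divide_distrib wi)
  also have "(\<Sum>i\<in>T. wt b T i / (b a - b i)) = - (\<Sum>i\<in>T. wt b T i / (b i - b a))"
    by (simp add: sum_negf[symmetric] minus_divide_right)
  also have "\<dots> = - wt b (insert a T) a" using IHa wa by simp
  finally have "1 / (\<Prod>k\<in>insert a T. (b k - x)) = (\<Sum>i\<in>T. wt b (insert a T) i / (b i - x)) + wt b (insert a T) a / (b a - x)"
    by simp
  then show ?case using insert.hyps by (simp add: add.commute)
qed

lemma D_zero:
  fixes b :: "nat \<Rightarrow> real"
  assumes "finite T" "card T \<ge> 2" "inj_on b T"
  shows "(\<Sum>i\<in>T. wt b T i) = 0"
proof -
  obtain a where a: "a \<in> T" using assms by fastforce
  define T' where "T' = T - {a}"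
  have T: "T = insert a T'" "a \<notin> T'" "finite T'" using a assms unfolding T'_def by auto
  have ne: "T' \<noteq> {}" 
  proof
    assume "T' = {}" then have "T = {a}" using T by simp
    then show False using assms(2) by simp
  qed
  have injT: "inj_on b T'" using assms T by (auto simp: inj_on_def)
  have ai: "\<And>i. i \<in> T' \<Longrightarrow> b a \<noteq> b i" using assms T
    by (metis inj_on_contraD insertCI)
  have IHa: "1 / (\<Prod>k\<in>T'. (b k - b a)) = (\<Sum>i\<in>T'. wt b T' i / (b i - b a))"
    using pf[OF T(3) ne injT] ai by auto
  have wa: "wt b T a = 1 / (\<Prod>k\<in>T'. (b k - b a))"
    using T by (simp add: wt_def prod_dividef)
  have wi: "wt b T i = wt b T' i / (b a - b i)" if "i \<in> T'" for i
  proof -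
    have "T - {i} = insert a (T' - {i})" using that T by auto
    then show ?thesis using T by (simp add: wt_def)
  qed
  have "(\<Sum>i\<in>T. wt b T i) = wt b T a + (\<Sum>i\<in>T'. wt b T i)" using T by simp
  also have "(\<Sum>i\<in>T'. wt b T i) = - (\<Sum>i\<in>T'. wt b T' i / (b i - b a))"
    by (simp add: wi sum_negf[symmetric] minus_divide_right)
  finally show ?thesis using IHa wa by simp
qed

definition cc :: "(nat \<Rightarrow> real) \<Rightarrow> nat \<Rightarrow> nat \<Rightarrow> nat \<Rightarrow> real" where
  "cc b j m i = (\<Prod>k\<in>{Suc j..m}. b k) * wt b {j..m} i"

lemma cc_rec:
  assumes "Suc j \<le> i" "i \<le> m" "inj_on b {j..m}"
  shows "cc b j m i * (b i - b j) = - b (Suc j) * cc b (Suc j) m i"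
proof -
  have P: "(\<Prod>k\<in>{Suc j..m}. b k) = b (Suc j) * (\<Prod>k\<in>{Suc (Suc j)..m}. b k)"
    using assms by (simp add: prod.atLeast_Suc_atMost)
  have set: "{j..m} - {i} = insert j ({Suc j..m} - {i})" using assms by auto
  have bji: "b j \<noteq> b i" using assms by (auto dest: inj_onD)
  have W: "wt b {j..m} i = wt b {Suc j..m} i / (b j - b i)"
    unfolding wt_def set by simp
  have "cc b j m i * (b i - b j) = b (Suc j) * (\<Prod>k\<in>{Suc (Suc j)..m}. b k) * wt b {Suc j..m} i * ((b i - b j) / (b j - b i))"
    unfolding cc_def P W by simp
  also have "(b i - b j) / (b j - b i) = -1" using bji
    by (metis minus_diff_eq divide_minus_left divide_self right_minus_eq)
  finally show ?thesis unfolding cc_def by simp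
qed

lemma cc_sum:
  assumes "j \<le> m" "inj_on b {j..m}"
  shows "(\<Sum>i=j..m. cc b j m i) = (if m = j then 1 else 0)"
proof (cases "m = j")
  case True then show ?thesis by (simp add: cc_def wt_def)
next
  case False
  then have "card {j..m} \<ge> 2" using assms by simp
  then have "(\<Sum>i=j..m. wt b {j..m} i) = 0" using D_zero assms by blast
  then show ?thesis using False by (simp add: cc_def sum_distrib_left[symmetric])
qed

lemma cc_psi:
  assumes "1 \<le> i" "i \<le> m"
  shows "b 1 * cc b 1 m i = b i * psi b i m"
proof -
  have "psi b i m = (\<Prod>k\<in>{1..m} - {i}. b k) * wt b {1..m} i"
    unfolding psi_def wt_def by (simp add: prod.distrib[symmetric])
  moreover have "b 1 * (\<Prod>k\<in>{Suc 1..m}. b k) = (\<Prod>k\<in>{1..m}. b k)"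
    using assms by (simp add: prod.atLeast_Suc_atMost)
  moreover have "(\<Prod>k\<in>{1..m}. b k) = b i * (\<Prod>k\<in>{1..m} - {i}. b k)"
    using assms by (simp add: prod.remove)
  ultimately show ?thesis unfolding cc_def by (simp add: mult.assoc)
qed

definition VV :: "nat \<Rightarrow> (nat \<Rightarrow> real) \<Rightarrow> (nat \<Rightarrow> real) \<Rightarrow> (nat \<Rightarrow> real) \<Rightarrow> nat \<Rightarrow> real" where
  "VV N alpha b X j = (\<Sum>m=j..N. alpha m * (\<Sum>i=j..m. cc b j m i * X i))"

lemma alg:
  assumes "1 \<le> j" "j \<le> N" "inj_on b {1..N}"
  shows "(\<Sum>m=j..N. alpha m * (\<Sum>i=j..m. cc b j m i * (U - b i * X i)))
     = alpha j * U - b j * VV N alpha b X j + b (Suc j) * VV N alpha b X (Suc j)"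
proof -
  have inj: "\<And>m. m \<le> N \<Longrightarrow> inj_on b {j..m}" using assms by (auto intro: inj_on_subset)
  have inj': "\<And>m. m \<le> N \<Longrightarrow> inj_on b {Suc j..m}" using assms by (auto intro: inj_on_subset)
  have split: "(\<Sum>m=j..N. alpha m * (\<Sum>i=j..m. cc b j m i * (U - b i * X i)))
     = U * (\<Sum>m=j..N. alpha m * (\<Sum>i=j..m. cc b j m i))
       - (\<Sum>m=j..N. alpha m * (\<Sum>i=j..m. cc b j m i * (b i * X i)))"
    by (simp add: algebra_simps sum_subtractf sum_distrib_left sum_distrib_right)
  have s1: "(\<Sum>m=j..N. alpha m * (\<Sum>i=j..m. cc b j m i)) = alpha j"
  proof -
    have "(\<Sum>m=j..N. alpha m * (\<Sum>i=j..m. cc b j m i)) = (\<Sum>m=j..N. (if m = j then alpha m else 0))"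
      by (rule sum.cong) (auto simp: cc_sum inj)
    also have "\<dots> = alpha j" using assms by simp
    finally show ?thesis .
  qed
  have s2: "(\<Sum>m=j..N. alpha m * (\<Sum>i=j..m. cc b j m i * (b i * X i)))
      = b j * VV N alpha b X j - b (Suc j) * VV N alpha b X (Suc j)"
  proof -
    have "(\<Sum>m=j..N. alpha m * (\<Sum>i=j..m. cc b j m i * (b i * X i))) - b j * VV N alpha b X j
        = (\<Sum>m=j..N. alpha m * (\<Sum>i=j..m. cc b j m i * (b i - b j) * X i))"
      unfolding VV_def by (simp add: algebra_simps sum_subtractf sum_distrib_left sum_distrib_right)
    also have "\<dots> = (\<Sum>m=Suc j..N. alpha m * (\<Sum>i=j..m. cc b j m i * (b i - b j) * X i))"
      using assms by (simp add: sum.atLeast_Suc_atMost)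
    also have "\<dots> = (\<Sum>m=Suc j..N. alpha m * (\<Sum>i=Suc j..m. - b (Suc j) * cc b (Suc j) m i * X i))"
    proof (rule sum.cong[OF refl])
      fix m assume m: "m \<in> {Suc j..N}"
      have "(\<Sum>i=j..m. cc b j m i * (b i - b j) * X i) = (\<Sum>i=Suc j..m. cc b j m i * (b i - b j) * X i)"
        using m by (simp add: sum.atLeast_Suc_atMost)
      also have "\<dots> = (\<Sum>i=Suc j..m. - b (Suc j) * cc b (Suc j) m i * X i)"
        by (rule sum.cong[OF refl]) (use m inj in \<open>auto simp: cc_rec\<close>)
      finally show "alpha m * (\<Sum>i=j..m. cc b j m i * (b i - b j) * X i) = alpha m * (\<Sum>i=Suc j..m. - b (Suc j) * cc b (Suc j) m i * X i)"
        by simp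
    qed
    also have "\<dots> = - b (Suc j) * VV N alpha b X (Suc j)"
      unfolding VV_def by (simp add: sum_distrib_left sum_negf algebra_simps)
    finally show ?thesis by simp
  qed
  show ?thesis using split s1 s2 by simp
qed

lemma abs_prod_le: "\<bar>(a::real) * b\<bar> \<le> a * a + b * b"
proof -
  have h: "0 \<le> (\<bar>a\<bar> - \<bar>b\<bar>) * (\<bar>a\<bar> - \<bar>b\<bar>)" by simp
  have e: "(\<bar>a\<bar> - \<bar>b\<bar>) * (\<bar>a\<bar> - \<bar>b\<bar>) = \<bar>a\<bar> * \<bar>a\<bar> + \<bar>b\<bar> * \<bar>b\<bar> - 2 * (\<bar>a\<bar> * \<bar>b\<bar>)"
    by (simp add: algebra_simps)
  have "\<bar>a\<bar> * \<bar>a\<bar> = a * a" "\<bar>b\<bar> * \<bar>b\<bar> = b * b" by (simp_all add: abs_mult_self_eq)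
  moreover have "0 \<le> \<bar>a\<bar> * \<bar>b\<bar>" by simp
  ultimately have "2 * (\<bar>a\<bar> * \<bar>b\<bar>) \<le> a * a + b * b" "0 \<le> \<bar>a\<bar> * \<bar>b\<bar>" using h e by simp_all
  then show ?thesis unfolding abs_mult by linarith
qed

lemma ode_unique:
  fixes w :: "nat \<Rightarrow> real \<Rightarrow> real" and A :: "nat \<Rightarrow> nat \<Rightarrow> real"
  assumes T: "0 \<le> T"
    and d: "\<And>i t. i \<le> N \<Longrightarrow> t \<in> {0..T} \<Longrightarrow>
       (w i has_real_derivative (\<Sum>k\<le>N. A i k * w k t)) (at t within {0..T})"
    and z: "\<And>i. i \<le> N \<Longrightarrow> w i 0 = 0"
  shows "\<And>i. i \<le> N \<Longrightarrow> w i T = 0"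
proof -
  define C where "C = (\<Sum>i\<le>N. \<Sum>k\<le>N. \<bar>A i k\<bar>)"
  define E where "E t = (\<Sum>i\<le>N. w i t * w i t)" for t
  define E' where "E' t = (\<Sum>i\<le>N. w i t * (\<Sum>k\<le>N. A i k * w k t) + (\<Sum>k\<le>N. A i k * w k t) * w i t)" for t
  define F where "F t = exp (- (4 * C) * t) * E t" for t
  define F' where "F' t = - (4 * C) * exp (- (4 * C) * t) * E t + exp (- (4 * C) * t) * E' t" for t
  have Enn: "E t \<ge> 0" for t unfolding E_def by (intro sum_nonneg) auto
  have wle: "w i t * w i t \<le> E t" if "i \<le> N" for i t
    unfolding E_def using that by (intro member_le_sum) auto
  have dE: "(E has_real_derivative E' t) (at t within {0..T})" if "t \<in> {0..T}" for t
    unfolding E_def[abs_def] E'_def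
    by (intro DERIV_sum DERIV_mult' d that) auto
  have E'le: "E' t \<le> 4 * C * E t" for t
  proof -
    have "E' t = (\<Sum>i\<le>N. \<Sum>k\<le>N. 2 * (A i k * (w i t * w k t)))"
      unfolding E'_def by (simp add: sum_distrib_left algebra_simps sum.distrib)
    also have "\<dots> \<le> (\<Sum>i\<le>N. \<Sum>k\<le>N. 4 * (\<bar>A i k\<bar> * E t))"
    proof (intro sum_mono)
      fix i k assume i: "i \<in> {..N}" and k: "k \<in> {..N}"
      have "\<bar>w i t * w k t\<bar> \<le> 2 * E t"
        using abs_prod_le[of "w i t" "w k t"] wle[of i t] wle[of k t] i k by simp
      then have "\<bar>A i k\<bar> * \<bar>w i t * w k t\<bar> \<le> \<bar>A i k\<bar> * (2 * E t)"
        by (intro mult_left_mono) auto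
      moreover have "A i k * (w i t * w k t) \<le> \<bar>A i k\<bar> * \<bar>w i t * w k t\<bar>"
        by (metis abs_ge_self abs_mult)
      moreover have "\<bar>A i k\<bar> * (2 * E t) = 2 * (\<bar>A i k\<bar> * E t)" by simp
      ultimately show "2 * (A i k * (w i t * w k t)) \<le> 4 * (\<bar>A i k\<bar> * E t)" by linarith
    qed
    also have "\<dots> = 4 * C * E t"
      unfolding C_def by (simp add: sum_distrib_left sum_distrib_right mult.assoc)
    finally show ?thesis .
  qed
  have dF: "(F has_derivative (\<lambda>h. F' t * h)) (at t within {0..T})" if "t \<in> {0..T}" for t
  proof -
    have "(F has_real_derivative F' t) (at t within {0..T})"
      unfolding F_def[abs_def] F'_def
      by (rule derivative_eq_intros refl dE that)+ simp
    then show ?thesis by (simp add: has_field_derivative_def)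
  qed
  have F'le: "F' t \<le> 0" for t
  proof -
    have "F' t = exp (- (4 * C) * t) * (E' t - 4 * C * E t)" unfolding F'_def by (simp add: algebra_simps)
    then show ?thesis using E'le[of t] by (simp add: mult_nonneg_nonpos)
  qed
  obtain x where "x \<in> {0..T}" "F T - F 0 = (\<lambda>h. F' x * h) (T - 0)"
    using mvt_very_simple[OF T, of F "\<lambda>t h. F' t * h"] dF by auto
  moreover have "F' x * T \<le> 0" using F'le[of x] T by (simp add: mult_nonpos_nonneg)
  ultimately have "F T \<le> F 0" by simp
  moreover have "F 0 = 0" unfolding F_def E_def using z by simp
  ultimately have "E T \<le> 0" unfolding F_def by (simp add: mult_le_0_iff)
  then have E0: "E T = 0" using Enn[of T] by simp
  fix i assume i: "i \<le> N"
  have "w i T * w i T = 0"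
    using E0 unfolding E_def using sum_nonneg_eq_0_iff[of "{..N}" "\<lambda>i. w i T * w i T"] i by simp
  then show "w i T = 0" by simp
qed


lemma row0:
  assumes "1 \<le> N"
  shows "(\<Sum>k\<le>N. Astar N alpha b 0 k * f k) = - (\<Sum>k=1..N. alpha k) * f 0 + b 1 * f 1"
proof -
  have "(\<Sum>k\<le>N. Astar N alpha b 0 k * f k) =
        (\<Sum>k\<le>N. (if k = 0 then - (\<Sum>k=1..N. alpha k) * f 0 else 0) + (if k = 1 then b 1 * f 1 else 0))"
    by (rule sum.cong) (auto simp: Astar_def)
  also have "\<dots> = - (\<Sum>k=1..N. alpha k) * f 0 + b 1 * f 1"
    using assms by (simp add: sum.distrib)
  finally show ?thesis .
qed

lemma rowj:
  assumes "1 \<le> j" "j \<le> N"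
  shows "(\<Sum>k\<le>N. Astar N alpha b j k * f k) = alpha j * f 0 - b j * f j + (if j < N then b (Suc j) * f (Suc j) else 0)"
proof -
  have "(\<Sum>k\<le>N. Astar N alpha b j k * f k) =
        (\<Sum>k\<le>N. (if k = 0 then alpha j * f 0 else 0) + (if k = j then - b j * f j else 0)
              + (if j < N then (if k = Suc j then b (Suc j) * f (Suc j) else 0) else 0))"
    by (rule sum.cong) (use assms in \<open>auto simp: Astar_def\<close>)
  also have "\<dots> = alpha j * f 0 - b j * f j + (if j < N then b (Suc j) * f (Suc j) else 0)"
    using assms by (simp add: sum.distrib)
  finally show ?thesis .
qed

lemma markov_part:
  assumes N: "N \<ge> 1"
    and alpha_nonneg: "\<forall>j\<in>{1..N}. alpha j \<ge> 0"
    and b_pos: "\<forall>j\<in>{1..N}. b j > 0"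
  shows "markov_generator N (\<lambda>i j. Astar N alpha b j i)"
  unfolding markov_generator_def
proof (intro conjI allI impI)
  fix i j assume "i \<le> N" "j \<le> N" "i \<noteq> j"
  then show "0 \<le> Astar N alpha b j i"
    using alpha_nonneg b_pos N by (auto simp: Astar_def less_imp_le)
next
  fix i assume i: "i \<le> N"
  show "(\<Sum>j\<le>N. Astar N alpha b j i) = 0"
  proof (cases "i = 0")
    case True
    have "(\<Sum>j\<le>N. Astar N alpha b j 0) = Astar N alpha b 0 0 + (\<Sum>j=1..N. Astar N alpha b j 0)"
      by (simp add: atMost_atLeast0 sum.atLeast_Suc_atMost)
    also have "(\<Sum>j=1..N. Astar N alpha b j 0) = (\<Sum>j=1..N. alpha j)"
      by (rule sum.cong) (auto simp: Astar_def)
    finally show ?thesis using True by (simp add: Astar_def)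
  next
    case False
    have "(\<Sum>j\<le>N. Astar N alpha b j i) =
       (\<Sum>j\<le>N. (if j = i - 1 then b i else 0) + (if j = i then - b i else 0))"
      by (rule sum.cong) (use False i in \<open>auto simp: Astar_def\<close>)
    also have "\<dots> = 0" using False i by (simp add: sum.distrib)
    finally show ?thesis .
  qed
qed

theorem theorem3p3:
  fixes N :: nat and alpha b :: "nat \<Rightarrow> real" and u :: "real \<Rightarrow> real" and u0 :: real
  assumes N: "N \<ge> 1"
    and alpha_nonneg: "\<forall>j\<in>{1..N}. alpha j \<ge> 0"
    and b_pos: "\<forall>j\<in>{1..N}. b j > 0"
    and b_distinct: "inj_on b {1..N}"
    and u_ode: "\<forall>t\<ge>0. (u has_real_derivative
        (- (\<Sum>j=1..N. alpha j) * u t + integral {0..t} (\<lambda>s. kernel N alpha b (t - s) * u s)))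
        (at t within {0..})"
    and u_init: "u 0 = u0"
  shows "markov_generator N (\<lambda>i j. Astar N alpha b j i) \<and>
    (\<forall>p :: nat \<Rightarrow> real \<Rightarrow> real.
       (\<forall>i\<le>N. \<forall>t\<ge>0. (p i has_real_derivative (\<Sum>k\<le>N. Astar N alpha b i k * p k t))
                        (at t within {0..})) \<and>
       (\<forall>i\<le>N. p i 0 = (if i = 0 then u0 else 0))
       \<longrightarrow> (\<forall>t\<ge>0. p 0 t = u t))"
proof (intro conjI allI impI)
  show "markov_generator N (\<lambda>i j. Astar N alpha b j i)"
    using markov_part[OF N alpha_nonneg b_pos] .
next
  fix p :: "nat \<Rightarrow> real \<Rightarrow> real" and T :: real
  assume pa: "(\<forall>i\<le>N. \<forall>t\<ge>0. (p i has_real_derivative (\<Sum>k\<le>N. Astar N alpha b i k * p k t))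
                        (at t within {0..})) \<and> (\<forall>i\<le>N. p i 0 = (if i = 0 then u0 else 0))"
    and T: "0 \<le> T"
  let ?S = "{0..T}"
  have sub: "?S \<subseteq> {0..}" by auto
  have ucont: "continuous_on ?S u"
  proof -
    have "continuous (at x within ?S) u" if "x \<in> ?S" for x
    proof -
      have "continuous (at x within {0..}) u"
        using u_ode that by (auto intro: DERIV_continuous)
      then show ?thesis using continuous_within_subset sub by blast
    qed
    then show ?thesis using continuous_on_eq_continuous_within by blast
  qed
  define g where "g i s = exp (b i * s) * u s" for i s
  define I where "I i x = integral {0..x} (g i)" for i x
  define J where "J i x = exp (- b i * x) * I i x" for i x
  have gcont: "continuous_on ?S (g i)" for i
    unfolding g_def by (intro continuous_intros ucont)
  have gint: "(g i has_integral I i x) {0..x}" if "x \<in> ?S" for i x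
  proof -
    have "continuous_on {0..x} (g i)" using that by (intro continuous_on_subset[OF gcont]) auto
    then show ?thesis unfolding I_def by (intro integrable_integral integrable_continuous_interval)
  qed
  have dI: "(I i has_real_derivative g i x) (at x within ?S)" if "x \<in> ?S" for i x
    unfolding has_real_derivative_iff_has_vector_derivative I_def[abs_def]
    by (rule integral_has_vector_derivative[OF gcont that])
  have dJ: "(J i has_real_derivative (u x - b i * J i x)) (at x within ?S)" if "x \<in> ?S" for i x
  proof -
    have "(J i has_real_derivative (exp (- b i * x) * g i x + (- b i * exp (- b i * x)) * I i x)) (at x within ?S)"
      unfolding J_def[abs_def]
      by (rule DERIV_mult'[OF _ dI[OF that]]) (rule derivative_eq_intros refl | simp)+
    moreover have "exp (- b i * x) * g i x = u x"
      unfolding g_def by (simp add: mult.assoc[symmetric] exp_add[symmetric])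
    ultimately show ?thesis unfolding J_def by (simp add: algebra_simps)
  qed
  define v where "v j x = (if j = 0 then u x else VV N alpha b (\<lambda>i. J i x) j)" for j x
  have J0: "J i 0 = 0" for i unfolding J_def I_def by simp
  have dv0: "(v 0 has_real_derivative (\<Sum>k\<le>N. Astar N alpha b 0 k * v k x)) (at x within ?S)"
    if "x \<in> ?S" for x
  proof -
    have e: "exp (- b i * (x - s)) = exp (- b i * x) * exp (b i * s)" for i s
      by (subst exp_add[symmetric]) (simp add: algebra_simps)
    define C where "C m i = alpha m * (b i * psi b i m) * exp (- b i * x)" for m i
    have kern: "(\<lambda>s. kernel N alpha b (x - s) * u s) = (\<lambda>s. \<Sum>m=1..N. \<Sum>i=1..m. C m i * g i s)"
    proof
      fix s
      show "kernel N alpha b (x - s) * u s = (\<Sum>m=1..N. \<Sum>i=1..m. C m i * g i s)"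
        unfolding kernel_def Kj_def sum_distrib_left sum_distrib_right
        proof (intro sum.cong refl)
          fix m i
          show "alpha m * (b i * psi b i m * exp (- b i * (x - s))) * u s = C m i * g i s"
            unfolding C_def g_def e by (simp add: mult_ac)
        qed
    qed
    have hi: "((\<lambda>s. \<Sum>m=1..N. \<Sum>i=1..m. C m i * g i s) has_integral (\<Sum>m=1..N. \<Sum>i=1..m. C m i * I i x)) {0..x}"
      by (intro has_integral_sum finite_atLeastAtMost has_integral_mult_right gint that)
    have "b 1 * VV N alpha b (\<lambda>i. J i x) 1 = (\<Sum>m=1..N. \<Sum>i=1..m. C m i * I i x)"
      unfolding VV_def sum_distrib_left
    proof (intro sum.cong refl)
      fix m i assume m: "m \<in> {1..N}" and i: "i \<in> {1..m}"
      have "b 1 * (alpha m * (cc b 1 m i * J i x)) = alpha m * (b 1 * cc b 1 m i) * J i x"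
        by (simp add: mult_ac)
      also have "b 1 * cc b 1 m i = b i * psi b i m" using i by (intro cc_psi) auto
      finally show "b 1 * (alpha m * (cc b 1 m i * J i x)) = C m i * I i x"
        by (simp add: C_def J_def mult_ac)
    qed
    then have int: "integral {0..x} (\<lambda>s. kernel N alpha b (x - s) * u s) = b 1 * v 1 x"
      using integral_unique[OF hi] kern by (simp add: v_def)
    have du: "(u has_real_derivative (- (\<Sum>j=1..N. alpha j) * u x + integral {0..x} (\<lambda>s. kernel N alpha b (x - s) * u s))) (at x within ?S)"
      using u_ode that by (intro DERIV_subset[OF _ sub]) auto
    have v0: "v 0 = u" by (simp add: v_def[abs_def])
    show ?thesis unfolding row0[OF N] v0 using du int by (simp add: v_def)
  qed
  have dvj: "(v j has_real_derivative (\<Sum>k\<le>N. Astar N alpha b j k * v k x)) (at x within ?S)"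
    if "x \<in> ?S" "1 \<le> j" "j \<le> N" for x j
  proof -
    have vj: "v j = (\<lambda>x. \<Sum>m=j..N. alpha m * (\<Sum>i=j..m. cc b j m i * J i x))"
      using that by (auto simp: v_def[abs_def] VV_def)
    have d: "((\<lambda>x. \<Sum>m=j..N. alpha m * (\<Sum>i=j..m. cc b j m i * J i x)) has_real_derivative
        (\<Sum>m=j..N. alpha m * (\<Sum>i=j..m. cc b j m i * (u x - b i * J i x)))) (at x within ?S)"
      by (intro DERIV_sum DERIV_cmult dJ that)
    have a: "(\<Sum>m=j..N. alpha m * (\<Sum>i=j..m. cc b j m i * (u x - b i * J i x)))
       = alpha j * u x - b j * VV N alpha b (\<lambda>i. J i x) j + b (Suc j) * VV N alpha b (\<lambda>i. J i x) (Suc j)"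
      using alg[OF that(2,3) b_distinct] .
    have r: "(\<Sum>k\<le>N. Astar N alpha b j k * v k x) = alpha j * u x - b j * VV N alpha b (\<lambda>i. J i x) j + b (Suc j) * VV N alpha b (\<lambda>i. J i x) (Suc j)"
      unfolding rowj[OF that(2,3)] using that by (auto simp: v_def VV_def)
    show ?thesis unfolding vj r using d a by simp
  qed
  define w where "w i x = p i x - v i x" for i x
  have dw: "(w i has_real_derivative (\<Sum>k\<le>N. Astar N alpha b i k * w k x)) (at x within ?S)"
    if "i \<le> N" "x \<in> ?S" for i x
  proof -
    have dp: "(p i has_real_derivative (\<Sum>k\<le>N. Astar N alpha b i k * p k x)) (at x within ?S)"
      using pa that by (intro DERIV_subset[OF _ sub]) auto
    have dv: "(v i has_real_derivative (\<Sum>k\<le>N. Astar N alpha b i k * v k x)) (at x within ?S)"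
      using dv0 dvj that by (cases "i = 0") auto
    show ?thesis unfolding w_def[abs_def]
      using DERIV_diff[OF dp dv] by (simp add: sum_subtractf right_diff_distrib)
  qed
  have w0: "w i 0 = 0" if "i \<le> N" for i
    using pa that u_init by (auto simp: w_def v_def VV_def J0)
  have "w 0 T = 0" using ode_unique[OF T dw w0] by auto
  then show "p 0 T = u T" by (simp add: w_def v_def)
qed

end
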